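(* The two identities $(xy)(zt)=(ty)(zx)$ and $x(xy)=y$ form an independent basis for $\Sigma_{2,4}$.
   Context: $\Sigma_{2,4}$ is the set of groupoid identities satisfied in the integers $\mathbb{Z}$ by both binary operations $x-y$ and $-x-y$. A basis is a set of identities whose equational consequences are exactly $\Sigma_{2,4}$; it is independent if no member is a consequence of the others. *)

theory Defs
  imports Main
begin

datatype gterm = Var nat | Op gterm gterm

type_synonym identity = "gterm \<times> gterm"

fun eval :: "('a \<Rightarrow> 'a \<Rightarrow> 'a) \<Rightarrow> (nat \<Rightarrow> 'a) \<Rightarrow> gterm \<Rightarrow> 'a" where
  "eval f v (Var n) = v n"
| "eval f v (Op s t) = f (eval f v s) (eval f v t)"

fun subst :: "(nat \<Rightarrow> gterm) \<Rightarrow> gterm \<Rightarrow> gterm" where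
  "subst \<sigma> (Var n) = \<sigma> n"
| "subst \<sigma> (Op s t) = Op (subst \<sigma> s) (subst \<sigma> t)"

definition satisfies :: "('a \<Rightarrow> 'a \<Rightarrow> 'a) \<Rightarrow> identity \<Rightarrow> bool" where
  "satisfies f e \<longleftrightarrow> (\<forall>v. eval f v (fst e) = eval f v (snd e))"

definition Sigma24 :: "identity set" where
  "Sigma24 = {e. satisfies (\<lambda>x y::int. x - y) e \<and> satisfies (\<lambda>x y::int. - x - y) e}"

inductive derivable :: "identity set \<Rightarrow> gterm \<Rightarrow> gterm \<Rightarrow> bool" for E where
  ax: "(s, t) \<in> E \<Longrightarrow> derivable E (subst \<sigma> s) (subst \<sigma> t)"
| refl: "derivable E t t"
| sym: "derivable E s t \<Longrightarrow> derivable E t s"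
| trans: "derivable E s t \<Longrightarrow> derivable E t u \<Longrightarrow> derivable E s u"
| cong: "derivable E s1 t1 \<Longrightarrow> derivable E s2 t2 \<Longrightarrow> derivable E (Op s1 s2) (Op t1 t2)"

definition consequences :: "identity set \<Rightarrow> identity set" where
  "consequences E = {(s, t). derivable E s t}"

definition is_basis :: "identity set \<Rightarrow> identity set \<Rightarrow> bool" where
  "is_basis E \<Sigma> \<longleftrightarrow> consequences E = \<Sigma>"

definition independent :: "identity set \<Rightarrow> bool" where
  "independent E \<longleftrightarrow> (\<forall>e\<in>E. e \<notin> consequences (E - {e}))"

text \<open>Variables x, y, z, t are Var 0, Var 1, Var 2, Var 3.\<close>
definition E1 :: identity where
  "E1 = (Op (Op (Var 0) (Var 1)) (Op (Var 2) (Var 3)),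
         Op (Op (Var 3) (Var 1)) (Op (Var 2) (Var 0)))"

definition E2 :: identity where
  "E2 = (Op (Var 0) (Op (Var 0) (Var 1)), Var 1)"

end

theory Submission
  imports Defs
begin

locale M = fixes f :: "'a \<Rightarrow> 'a \<Rightarrow> 'a" (infixl "\<cdot>" 70) and z0 :: 'a
  assumes e1: "(x \<cdot> y) \<cdot> (z \<cdot> t) = (t \<cdot> y) \<cdot> (z \<cdot> x)"
  and e2: "x \<cdot> (x \<cdot> y) = y"
begin
lemma d1: "(x \<cdot> y) \<cdot> (z \<cdot> t) = (x \<cdot> z) \<cdot> (y \<cdot> t)" by (metis e1 e2)
lemma d3: "x \<cdot> (y \<cdot> (z \<cdot> t)) = z \<cdot> (y \<cdot> (x \<cdot> t))" by (metis e1 e2)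
lemma indep: "(x \<cdot> w) \<cdot> ((z \<cdot> w) \<cdot> y) = (x \<cdot> v) \<cdot> ((z \<cdot> v) \<cdot> y)" by (smt (verit) d1 e2)
definition "pl x y = (x \<cdot> z0) \<cdot> ((z0 \<cdot> z0) \<cdot> y)"
definition "ng x = (z0 \<cdot> x) \<cdot> ((x \<cdot> x) \<cdot> z0)"
definition "ph x = x \<cdot> (z0 \<cdot> z0)"
lemma K: "(pl x y) \<cdot> z0 = x \<cdot> (z0 \<cdot> (y \<cdot> z0))" unfolding pl_def by (metis (mono_tags, lifting) d1 e1 e2)
lemma plw: "pl x y = (x \<cdot> w) \<cdot> ((z0 \<cdot> w) \<cdot> y)" unfolding pl_def by (metis indep e2)
lemma pl_ng: "pl a (ng b) = (a \<cdot> b) \<cdot> ((b \<cdot> b) \<cdot> z0)" unfolding pl_def ng_def by (metis e2 indep)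
lemma Lm: "x \<cdot> (y \<cdot> (z \<cdot> t)) = ((x \<cdot> k) \<cdot> ((y \<cdot> k) \<cdot> z)) \<cdot> t" by (metis d1 d3 e1 e2 indep)
lemma r: "(x \<cdot> (y \<cdot> y)) \<cdot> (y \<cdot> y) = x" using d1 d3 e1 e2 indep by metis
lemma Tk: "((x \<cdot> k) \<cdot> w) \<cdot> (((y \<cdot> k) \<cdot> w) \<cdot> c) = ((x \<cdot> j) \<cdot> w) \<cdot> (((y \<cdot> j) \<cdot> w) \<cdot> c)"
proof -
  have "((x \<cdot> k) \<cdot> w) \<cdot> (((y \<cdot> k) \<cdot> w) \<cdot> c) = ((x \<cdot> k) \<cdot> ((y \<cdot> k) \<cdot> w)) \<cdot> (w \<cdot> c)" by (rule d1)
  also have "\<dots> = ((x \<cdot> j) \<cdot> ((y \<cdot> j) \<cdot> w)) \<cdot> (w \<cdot> c)" by (simp only: indep[of x k y w j])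
  also have "\<dots> = ((x \<cdot> j) \<cdot> w) \<cdot> (((y \<cdot> j) \<cdot> w) \<cdot> c)" by (rule d1)
  finally show ?thesis .
qed
lemma T: "x \<cdot> (y \<cdot> c) = ((x \<cdot> k) \<cdot> w) \<cdot> (((y \<cdot> k) \<cdot> w) \<cdot> c)"
proof -
  have "x \<cdot> (y \<cdot> c) = ((x \<cdot> (w \<cdot> w)) \<cdot> (w \<cdot> w)) \<cdot> (((y \<cdot> (w \<cdot> w)) \<cdot> (w \<cdot> w)) \<cdot> c)" by (simp only: r)
  also have "\<dots> = ((x \<cdot> k) \<cdot> (w \<cdot> w)) \<cdot> (((y \<cdot> k) \<cdot> (w \<cdot> w)) \<cdot> c)" by (rule Tk)
  also have "\<dots> = ((x \<cdot> k) \<cdot> w) \<cdot> (((y \<cdot> k) \<cdot> w) \<cdot> c)" by (rule indep)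
  finally show ?thesis .
qed
lemma assoc: "pl (pl x y) z = pl x (pl y z)"
proof -
  have "pl (pl x y) z = (x \<cdot> (z0 \<cdot> (y \<cdot> z0))) \<cdot> ((z0 \<cdot> z0) \<cdot> z)"
    using K[of x y] by (simp add: pl_def[of "pl x y"])
  also have "\<dots> = (((x \<cdot> z0) \<cdot> z0) \<cdot> (((z0 \<cdot> z0) \<cdot> z0) \<cdot> (y \<cdot> z0))) \<cdot> ((z0 \<cdot> z0) \<cdot> z)"
    by (simp only: T[of x z0 "y \<cdot> z0" z0 z0])
  also have "\<dots> = (x \<cdot> z0) \<cdot> ((z0 \<cdot> z0) \<cdot> ((y \<cdot> z0) \<cdot> ((z0 \<cdot> z0) \<cdot> z)))"
    by (rule Lm[symmetric])
  also have "\<dots> = pl x (pl y z)" by (simp add: pl_def)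
  finally show ?thesis .
qed
lemma opf1: "((x \<cdot> (z0 \<cdot> z0)) \<cdot> y) \<cdot> ((y \<cdot> y) \<cdot> (z0 \<cdot> z0)) = x \<cdot> y"
proof -
  have "((x \<cdot> (z0 \<cdot> z0)) \<cdot> y) \<cdot> ((y \<cdot> y) \<cdot> (z0 \<cdot> z0)) = ((x \<cdot> (z0 \<cdot> z0)) \<cdot> (z0 \<cdot> z0)) \<cdot> ((y \<cdot> (z0 \<cdot> z0)) \<cdot> (z0 \<cdot> z0))"
    by (rule indep)
  also have "\<dots> = x \<cdot> y" by (simp add: r)
  finally show ?thesis .
qed
lemma comm: "pl x y = pl y x" unfolding pl_def using e1 by simp
lemma mal2: "pl c (ng b) = (z0 \<cdot> z0) \<cdot> ((b \<cdot> z0) \<cdot> c)" using pl_ng d1 d3 e1 e2 indep by fastforce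
lemma mal: "pl (pl a (ng b)) c = (a \<cdot> b) \<cdot> ((b \<cdot> b) \<cdot> c)"
proof -
  have "pl (pl a (ng b)) c = pl a (pl c (ng b))" using assoc comm by metis
  also have "\<dots> = (a \<cdot> z0) \<cdot> ((b \<cdot> z0) \<cdot> c)" by (simp only: mal2 pl_def[of a "(z0 \<cdot> z0) \<cdot> ((b \<cdot> z0) \<cdot> c)"] e2)
  also have "\<dots> = (a \<cdot> b) \<cdot> ((b \<cdot> b) \<cdot> c)" by (rule indep)
  finally show ?thesis .
qed
lemma zero: "pl x z0 = x" unfolding pl_def by (metis e1 e2)
lemma inv: "pl x (ng x) = z0" unfolding pl_def ng_def by (metis d1 e2)
lemma phadd: "ph (pl x y) = pl (ph x) (ph y)" unfolding pl_def ph_def by (metis d1 e2)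
lemma phph: "ph (ph x) = x" unfolding ph_def by (metis e1 e2)
lemma opf: "x \<cdot> y = pl (pl (ph x) (ng y)) (z0 \<cdot> z0)" 
  using mal opf1 unfolding ph_def by simp
end

lemma eval_subst: "eval f v (subst \<sigma> s) = eval f (\<lambda>n. eval f v (\<sigma> n)) s"
  by (induction s) auto

lemma derivable_sound:
  assumes "derivable E s t" and "\<And>e. e \<in> E \<Longrightarrow> satisfies f e"
  shows "eval f v s = eval f v t"
  using assms(1) proof (induction arbitrary: v rule: derivable.induct)
  case (ax s t \<sigma>)
  then show ?case using assms(2)[of "(s,t)"] by (simp add: eval_subst satisfies_def)
qed auto

fun valA :: "gterm \<Rightarrow> nat \<Rightarrow> int" and valB :: "gterm \<Rightarrow> nat \<Rightarrow> int" where
  "valA (Var m) n = (if n = m then 1 else 0)"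
| "valB (Var m) n = 0"
| "valA (Op s t) n = valB s n - valA t n"
| "valB (Op s t) n = valA s n - valB t n"

fun sA :: "gterm \<Rightarrow> int" and sB :: "gterm \<Rightarrow> int" where
  "sA (Var m) = 1"
| "sB (Var m) = 0"
| "sA (Op s t) = sB s - sA t"
| "sB (Op s t) = sA s - sB t"

fun pq :: "gterm \<Rightarrow> int \<times> int" where
  "pq (Var m) = (0, 0)"
| "pq (Op s t) = (snd (pq s) - fst (pq t) + 1, fst (pq s) - snd (pq t))"

fun vs :: "gterm \<Rightarrow> nat set" where
  "vs (Var m) = {m}"
| "vs (Op s t) = vs s \<union> vs t"

lemma finite_vs: "finite (vs t)" by (induction t) auto

lemma ev1: "eval (\<lambda>x y::int. x - y) (\<lambda>m. if m = n then 1 else 0) t = valA t n + valB t n"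
  by (induction t) auto
lemma ev2: "eval (\<lambda>x y::int. - x - y) (\<lambda>m. if m = n then 1 else 0) t = valA t n - valB t n"
  by (induction t) auto
lemma ev3: "eval (\<lambda>x y::int. x - y) (\<lambda>m. 1) t = sA t + sB t"
  by (induction t) auto
lemma ev4: "eval (\<lambda>x y::int. - x - y) (\<lambda>m. 1) t = sA t - sB t"
  by (induction t) auto

lemma pq_inv: "fst (pq t) - 2 * snd (pq t) = sB t \<and> snd (pq t) - 2 * fst (pq t) = sA t - 1"
  by (induction t) auto

lemma pq_eq: assumes "sA s = sA t" "sB s = sB t" shows "pq s = pq t"
  using pq_inv[of s] pq_inv[of t] assms by (cases "pq s"; cases "pq t") auto

lemma Sigma24_val:
  assumes "(s, t) \<in> Sigma24"
  shows "valA s = valA t" "valB s = valB t" "sA s = sA t" "sB s = sB t"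
proof -
  have 1: "\<And>v. eval (\<lambda>x y::int. x - y) v s = eval (\<lambda>x y::int. x - y) v t"
   and 2: "\<And>v. eval (\<lambda>x y::int. - x - y) v s = eval (\<lambda>x y::int. - x - y) v t"
    using assms by (auto simp: Sigma24_def satisfies_def)
  have "valA s n = valA t n \<and> valB s n = valB t n" for n
    using 1[of "\<lambda>m. if m = n then 1 else 0"] 2[of "\<lambda>m. if m = n then 1 else 0"]
    by (simp add: ev1 ev2)
  then show "valA s = valA t" "valB s = valB t" by auto
  show "sA s = sA t" "sB s = sB t" using 1[of "\<lambda>m. 1"] 2[of "\<lambda>m. 1"] by (simp_all add: ev3 ev4)
qed

section \<open>Term model\<close>

lemma derivable_equivp: "equivp (derivable E)"
  by (rule equivpI) (auto simp: reflp_def symp_def transp_def intro: derivable.intros)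

quotient_type Q = gterm / "derivable {E1, E2}"
  by (rule derivable_equivp)

lift_definition qop :: "Q \<Rightarrow> Q \<Rightarrow> Q" is Op by (rule derivable.cong)

lemma qE1: "qop (qop x y) (qop z t) = qop (qop t y) (qop z x)"
proof (transfer)
  fix x y z t
  have "derivable {E1, E2} (subst (\<lambda>n. if n = 0 then x else if n = 1 then y else if n = 2 then z else t) (fst E1))
          (subst (\<lambda>n. if n = 0 then x else if n = 1 then y else if n = 2 then z else t) (snd E1))"
    by (rule derivable.ax) simp
  then show "derivable {E1, E2} (Op (Op x y) (Op z t)) (Op (Op t y) (Op z x))"
    by (simp add: E1_def)
qed

lemma qE2: "qop x (qop x y) = y"
proof (transfer)
  fix x y
  have "derivable {E1, E2} (subst (\<lambda>n. if n = 0 then x else y) (fst E2))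
          (subst (\<lambda>n. if n = 0 then x else y) (snd E2))"
    by (rule derivable.ax) simp
  then show "derivable {E1, E2} (Op x (Op x y)) y"
    by (simp add: E2_def)
qed

interpretation QM: M qop "abs_Q (Var 0)"
  by unfold_locales (rule qE1, rule qE2)

instantiation Q :: ab_group_add
begin
definition zero_Q :: Q where "zero_Q = abs_Q (Var 0)"
definition plus_Q :: "Q \<Rightarrow> Q \<Rightarrow> Q" where "plus_Q a b = QM.pl a b"
definition uminus_Q :: "Q \<Rightarrow> Q" where "uminus_Q a = QM.ng a"
definition minus_Q :: "Q \<Rightarrow> Q \<Rightarrow> Q" where "minus_Q a b = QM.pl a (QM.ng b)"
instance
proof
  fix a b c :: Q
  show "a + b + c = a + (b + c)" by (simp add: plus_Q_def QM.assoc)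
  show "a + b = b + a" by (simp add: plus_Q_def QM.comm)
  show "0 + a = a" by (simp add: plus_Q_def zero_Q_def QM.comm QM.zero)
  show "- a + a = 0" by (simp add: plus_Q_def zero_Q_def uminus_Q_def QM.comm QM.inv)
  show "a - b = a + - b" by (simp add: plus_Q_def minus_Q_def uminus_Q_def)
qed
end

definition phQ :: "Q \<Rightarrow> Q" where "phQ = QM.ph"
definition cQ :: Q where "cQ = qop (abs_Q (Var 0)) (abs_Q (Var 0))"

lemma phQ_add: "phQ (a + b) = phQ a + phQ b"
  by (simp add: phQ_def plus_Q_def QM.phadd)
lemma phQ_ph: "phQ (phQ a) = a"
  by (simp add: phQ_def QM.phph)
lemma qop_lin: "qop a b = phQ a - b + cQ"
  by (simp add: phQ_def plus_Q_def minus_Q_def cQ_def QM.opf[of a b])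
lemma phQ_0: "phQ 0 = 0"
  using phQ_add[of 0 0] by simp
lemma phQ_neg: "phQ (- a) = - phQ a"
  using add.inverse_unique[of "phQ a" "phQ (- a)"] phQ_add[of a "- a"] phQ_0 by simp
lemma phQ_diff: "phQ (a - b) = phQ a - phQ b"
  using phQ_add[of a "- b"] phQ_neg by simp
lemma phQ_sum: "phQ (sum g V) = sum (\<lambda>n. phQ (g n)) V"
  by (induction V rule: infinite_finite_induct) (auto simp: phQ_0 phQ_add)

fun np :: "nat \<Rightarrow> 'a::ab_group_add \<Rightarrow> 'a" where
  "np 0 x = 0"
| "np (Suc n) x = x + np n x"

lemma np_add: "np (a + b) x = np a x + np b x"
  by (induction a) (auto simp: algebra_simps)

lemma np_hom: assumes "\<And>a b. h (a + b) = h a + h b" "h 0 = 0"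
  shows "h (np n x) = np n (h x)"
  by (induction n) (auto simp: assms)

definition zsm :: "int \<Rightarrow> 'a::ab_group_add \<Rightarrow> 'a" where
  "zsm k x = np (nat k) x - np (nat (- k)) x"

lemma zsm_eq: "zsm (int a - int b) x = np a x - np b x"
proof -
  have "nat (int a - int b) + b = nat (- (int a - int b)) + a" by simp
  then have "np (nat (int a - int b) + b) x = np (nat (- (int a - int b)) + a) x" by simp
  then have "np (nat (int a - int b)) x + np b x = np (nat (- (int a - int b))) x + np a x"
    by (simp add: np_add)
  then show ?thesis unfolding zsm_def by (simp add: algebra_simps)
qed

lemma int_split: obtains a b where "k = int a - int b"
  using that[of "nat k" "nat (- k)"] by simp

lemma zsm_add: "zsm (k + l) x = zsm k x + zsm l x"
proof -
  obtain a b where k: "k = int a - int b" by (rule int_split)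
  obtain c d where l: "l = int c - int d" by (rule int_split)
  have e: "k + l = int (a + c) - int (b + d)" using k l by simp
  have "zsm (k + l) x = np (a + c) x - np (b + d) x" by (simp only: e zsm_eq)
  also have "\<dots> = (np a x - np b x) + (np c x - np d x)" by (simp add: np_add algebra_simps)
  also have "\<dots> = zsm k x + zsm l x" by (simp only: k l zsm_eq)
  finally show ?thesis .
qed

lemma zsm_0[simp]: "zsm 0 x = 0" by (simp add: zsm_def)
lemma zsm_1[simp]: "zsm 1 x = x" by (simp add: zsm_def)

lemma zsm_minus: "zsm (- k) x = - zsm k x"
  using add.inverse_unique[of "zsm k x" "zsm (- k) x"] zsm_add[of k "- k" x] by simp

lemma zsm_diff: "zsm (k - l) x = zsm k x - zsm l x"
  using zsm_add[of k "- l" x] zsm_minus[of l x] by simp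

lemma zsm_phQ: "phQ (zsm k x) = zsm k (phQ x)"
  unfolding zsm_def phQ_diff using np_hom[of phQ] phQ_add phQ_0 by simp

section \<open>Linear representation in the term model\<close>

definition XQ :: "nat \<Rightarrow> Q" where "XQ n = abs_Q (Var n)"

definition RQ :: "nat set \<Rightarrow> gterm \<Rightarrow> Q" where
  "RQ V t = (\<Sum>n\<in>V. zsm (valA t n) (XQ n) + zsm (valB t n) (phQ (XQ n)))
     + zsm (fst (pq t)) cQ + zsm (snd (pq t)) (phQ cQ)"

lemma rep: "finite V \<Longrightarrow> vs t \<subseteq> V \<Longrightarrow> abs_Q t = RQ V t"
proof (induction t)
  case (Var m)
  have "(\<Sum>n\<in>V. zsm (if n = m then 1 else 0) (XQ n)) = (\<Sum>n\<in>V. if n = m then XQ n else 0)"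
    by (rule sum.cong) auto
  also have "\<dots> = XQ m" using Var by simp
  finally have "RQ V (Var m) = XQ m" by (simp add: RQ_def)
  then show ?case by (simp add: XQ_def)
next
  case (Op s t)
  then have IH: "abs_Q s = RQ V s" "abs_Q t = RQ V t" by auto
  have "abs_Q (Op s t) = qop (abs_Q s) (abs_Q t)" by (simp add: qop.abs_eq)
  also have "\<dots> = phQ (RQ V s) - RQ V t + cQ" by (simp add: IH qop_lin)
  also have "\<dots> = RQ V (Op s t)"
    unfolding RQ_def
    by (simp add: phQ_add phQ_sum zsm_phQ phQ_ph zsm_add zsm_diff sum.distrib sum_subtractf
        algebra_simps)
  finally show ?case .
qed

lemma sat_E: "satisfies (\<lambda>x y::int. x - y) E1" "satisfies (\<lambda>x y::int. x - y) E2"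
  "satisfies (\<lambda>x y::int. - x - y) E1" "satisfies (\<lambda>x y::int. - x - y) E2"
  by (auto simp: satisfies_def E1_def E2_def)

lemma complete: assumes "(s, t) \<in> Sigma24" shows "derivable {E1, E2} s t"
proof -
  note v = Sigma24_val[OF assms]
  define V where "V = vs s \<union> vs t"
  have fin: "finite V" by (simp add: V_def finite_vs)
  have "pq s = pq t" using pq_eq v(3,4) .
  then have "RQ V s = RQ V t" using v(1,2) by (simp add: RQ_def)
  then have "abs_Q s = abs_Q t" using rep[OF fin, of s] rep[OF fin, of t] by (simp add: V_def)
  then show ?thesis by (simp add: Q.abs_eq_iff)
qed

lemma sound: assumes "derivable {E1, E2} s t" shows "(s, t) \<in> Sigma24"
proof -
  have h1: "\<And>e. e \<in> {E1, E2} \<Longrightarrow> satisfies (\<lambda>x y::int. x - y) e" using sat_E by auto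
  have h2: "\<And>e. e \<in> {E1, E2} \<Longrightarrow> satisfies (\<lambda>x y::int. - x - y) e" using sat_E by auto
  show ?thesis unfolding Sigma24_def satisfies_def
    using derivable_sound[OF assms h1] derivable_sound[OF assms h2] by auto
qed

lemma E1_not: "\<not> derivable {E2} (fst E1) (snd E1)"
proof
  assume "derivable {E2} (fst E1) (snd E1)"
  then have "eval (\<lambda>x y::nat. y) (\<lambda>n. n) (fst E1) = eval (\<lambda>x y::nat. y) (\<lambda>n. n) (snd E1)"
    by (rule derivable_sound) (auto simp: satisfies_def E2_def)
  then show False by (simp add: E1_def)
qed

lemma E2_not: "\<not> derivable {E1} (fst E2) (snd E2)"
proof
  assume "derivable {E1} (fst E2) (snd E2)"
  then have "eval (\<lambda>x y::bool. True) (\<lambda>n. False) (fst E2) = eval (\<lambda>x y::bool. True) (\<lambda>n. False) (snd E2)"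
    by (rule derivable_sound) (auto simp: satisfies_def E1_def)
  then show False by (simp add: E2_def)
qed

theorem theorem3p2:
  shows "is_basis {E1, E2} Sigma24 \<and> independent {E1, E2}"
proof
  show "is_basis {E1, E2} Sigma24"
    unfolding is_basis_def consequences_def using complete sound by auto
  have ne: "E1 \<noteq> E2" by (simp add: E1_def E2_def)
  have a: "{E1, E2} - {E1} = {E2}" "{E1, E2} - {E2} = {E1}" using ne by auto
  show "independent {E1, E2}"
    unfolding independent_def consequences_def using E1_not E2_not a
    by (auto simp: case_prod_beta)
qed

end
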